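(* In the setting of the context, let $\gamma^*\in(0,1)$ be the unique solution of $\sigma\gamma+mf\log(1-\gamma)=0$. If $\gamma\in(0,1)\setminus\{\gamma^*\}$, then there exists a number $\bar u_\gamma$ such that $\lim_{t\to+\infty}u_\gamma(x,t)=\bar u_\gamma$ for every $x\in[0,1)$.
   Context: Fix constants $\sigma>0$, $f>0$, $m>0$ with $\sigma>mf$. For $\gamma\in(0,1]$ let $u_\gamma$ be the unique (mild, in fact classical) solution of \[ \partial_tu_\gamma+\sigma x(1-x)\partial_xu_\gamma=\frac{mf}{\gamma}\big[u_\gamma(x+\gamma(1-x),t)-u_\gamma(x,t)\big]\ (0\le x\le1,\ t>0),\quad u_\gamma(x,0)=x. \] *)

theory Defs
  imports "HOL-Analysis.Analysis"
begin

definition classical_solution ::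
  "real \<Rightarrow> real \<Rightarrow> real \<Rightarrow> real \<Rightarrow> (real \<Rightarrow> real \<Rightarrow> real) \<Rightarrow> bool" where
  "classical_solution \<sigma> m f \<gamma> u \<longleftrightarrow>
     continuous_on ({0..1} \<times> {0..}) (\<lambda>(x, t). u x t) \<and>
     (\<forall>x\<in>{0..1}. u x 0 = x) \<and>
     (\<exists>ux ut :: real \<Rightarrow> real \<Rightarrow> real.
        continuous_on ({0..1} \<times> {0<..}) (\<lambda>(x, t). ux x t) \<and>
        continuous_on ({0..1} \<times> {0<..}) (\<lambda>(x, t). ut x t) \<and>
        (\<forall>x\<in>{0..1}. \<forall>t>0.
           ((\<lambda>y. u y t) has_real_derivative ux x t) (at x within {0..1}) \<and>
           ((\<lambda>s. u x s) has_real_derivative ut x t) (at t) \<and>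
           ut x t + \<sigma> * x * (1 - x) * ux x t
             = (m * f / \<gamma>) * (u (x + \<gamma> * (1 - x)) t - u x t)))"

end

theory Submission
  imports Defs "HOL-Real_Asymp.Real_Asymp"
begin

lemma first_zero:
  fixes z :: "'a::topological_space \<Rightarrow> real \<Rightarrow> real"
  assumes init: "\<And>p. p\<in>D \<Longrightarrow> z p 0 > 0"
  and cpt: "\<And>T. T \<ge> 0 \<Longrightarrow> compact {(p,t). p\<in>D \<and> t\<in>{0..T} \<and> z p t \<le> 0}"
  and lcont: "\<And>p t. p\<in>D \<Longrightarrow> t > 0 \<Longrightarrow> continuous (at_left t) (z p)"
  and key: "\<And>p t. p\<in>D \<Longrightarrow> t > 0 \<Longrightarrow> (\<forall>q\<in>D. z q t \<ge> 0) \<Longrightarrow> z p t = 0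
      \<Longrightarrow> (\<forall>s\<in>{0..<t}. z p s > 0) \<Longrightarrow> False"
  and pD: "p \<in> D" and t: "t \<ge> 0"
  shows "z p t > 0"
proof (rule ccontr)
  assume neg: "\<not> z p t > 0"
  define B where "B = {(p,s). p\<in>D \<and> s\<in>{0..t} \<and> z p s \<le> 0}"
  have cB: "compact B" unfolding B_def using cpt t by blast
  have "(p,t) \<in> B" using neg pD t unfolding B_def by auto
  hence ne: "snd ` B \<noteq> {}" by auto
  have "compact (snd ` B)" by (intro compact_continuous_image continuous_intros cB)
  then obtain t0 where t0: "t0 \<in> snd ` B" and t0min: "\<forall>s\<in>snd ` B. t0 \<le> s"
    using compact_attains_inf[OF _ ne] by blast
  then obtain p0 where p0: "p0 \<in> D" "t0 \<in> {0..t}" "z p0 t0 \<le> 0" unfolding B_def by auto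
  have t0pos: "t0 > 0" using p0 init[of p0] by (cases "t0 = 0") auto
  have before: "z q s > 0" if "q \<in> D" "s \<in> {0..<t0}" for q s
  proof (rule ccontr)
    assume "\<not> z q s > 0"
    hence "(q,s) \<in> B" using that p0 unfolding B_def by auto
    hence "t0 \<le> s" using t0min by force
    thus False using that by auto
  qed
  have nonneg: "z q t0 \<ge> 0" if q: "q \<in> D" for q
  proof -
    have "(z q \<longlongrightarrow> z q t0) (at_left t0)" using lcont[OF q t0pos] by (simp add: continuous_within)
    moreover have "\<forall>\<^sub>F s in at_left t0. z q s \<ge> 0"
      unfolding eventually_at_left_field using t0pos before[OF q]
      by (intro exI[of _ 0]) (auto intro: less_imp_le)
    ultimately show ?thesis by (intro tendsto_lowerbound) auto
  qed
  have "z p0 t0 = 0" using nonneg[OF p0(1)] p0(3) by auto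
  thus False using key[OF p0(1) t0pos] nonneg before[OF p0(1)] by blast
qed

lemma fermat01:
  fixes g :: "real \<Rightarrow> real"
  assumes "(g has_real_derivative d) (at x within {0..1})" "a < x" "x < b" "0 \<le> a" "b \<le> 1"
    "\<And>y. a < y \<Longrightarrow> y < b \<Longrightarrow> g x \<le> g y"
  shows "d = 0"
proof -
  have "x \<in> interior {0..1::real}" using assms by auto
  hence "(g has_real_derivative d) (at x)" using assms(1) at_within_interior by metis
  moreover have "\<forall>y. \<bar>x - y\<bar> < min (x-a) (b-x) \<longrightarrow> g x \<le> g y" using assms(6) by auto
  ultimately show ?thesis using DERIV_local_min[of g d x "min (x-a) (b-x)"] assms by auto
qed

lemma tderiv_nonpos:
  fixes h :: "real \<Rightarrow> real"
  assumes "(h has_real_derivative d) (at t)" "h t = 0" "\<forall>s\<in>{0..<t}. h s > 0" "t > 0"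
  shows "d \<le> 0"
proof (rule ccontr)
  assume "\<not> d \<le> 0"
  then obtain e where e: "e > 0" "\<forall>k>0. k < e \<longrightarrow> h (t - k) < h t"
    using DERIV_pos_inc_left[OF assms(1)] by auto
  define k where "k = min (e/2) (t/2)"
  have k: "k > 0" "k < e" "k < t" using e assms(4) unfolding k_def by auto
  have "h (t - k) < 0" using e(2) k assms(2) by auto
  moreover have "h (t - k) > 0" using assms(3) k by auto
  ultimately show False by auto
qed

lemma g_deriv: "x < 1 \<Longrightarrow> ((\<lambda>x::real. s * x + c * ln (1 - x)) has_real_derivative (s - c / (1 - x))) (at x)"
  by (auto intro!: derivative_eq_intros simp: field_simps)

lemma g_sign:
  fixes s c g gs :: real
  assumes c: "c > 0" and gs: "0 < gs" "gs < 1" and g0: "s * gs + c * ln (1 - gs) = 0"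
    and g: "0 < g" "g < 1"
  shows "g < gs \<Longrightarrow> s * g + c * ln (1 - g) > 0"
    and "g > gs \<Longrightarrow> s * g + c * ln (1 - g) < 0"
proof -
  define G where "G = (\<lambda>x::real. s * x + c * ln (1 - x))"
  define G' where "G' = (\<lambda>x::real. s - c / (1 - x))"
  have D: "\<And>x. x < 1 \<Longrightarrow> (G has_real_derivative G' x) (at x)" unfolding G_def G'_def by (rule g_deriv)
  have mono: "G' y < G' x" if "x < y" "y < 1" for x y
  proof -
    have "c / (1 - x) < c / (1 - y)" using that c by (intro divide_strict_left_mono) auto
    thus ?thesis unfolding G'_def by auto
  qed
  have G0: "G 0 = 0" "G gs = 0" using g0 unfolding G_def by auto
  {
    assume lt: "g < gs"
    obtain x1 where x1: "0 < x1" "x1 < g" "G g - G 0 = (g - 0) * G' x1"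
      using MVT2[of 0 g G G'] D g by force
    obtain x2 where x2: "g < x2" "x2 < gs" "G gs - G g = (gs - g) * G' x2"
      using MVT2[of g gs G G'] D lt gs by force
    have "G' x2 < G' x1" using mono[of x1 x2] x1 x2 gs by linarith
    have e1: "G' x1 = G g / g" using x1 G0 g by (simp add: field_simps)
    have e2: "G' x2 = - G g / (gs - g)" using x2 G0 lt by (simp add: field_simps)
    have "G g / g + G g / (gs - g) > 0" using \<open>G' x2 < G' x1\<close> e1 e2 by simp
    hence "G g * (1/g + 1/(gs-g)) > 0" by (simp add: distrib_left)
    moreover have "1/g + 1/(gs-g) > 0" using g lt by (intro add_pos_pos) auto
    ultimately show "s * g + c * ln (1 - g) > 0" unfolding G_def using zero_less_mult_pos2 by blast
  }
  {
    assume gt: "g > gs"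
    obtain x1 where x1: "0 < x1" "x1 < gs" "G gs - G 0 = (gs - 0) * G' x1"
      using MVT2[of 0 gs G G'] D gs by force
    obtain x2 where x2: "gs < x2" "x2 < g" "G g - G gs = (g - gs) * G' x2"
      using MVT2[of gs g G G'] D gt g by force
    have "G' x1 = 0" using x1 G0 gs by auto
    hence "G' x2 < 0" using mono[of x1 x2] x1 x2 g by linarith
    hence "G g < 0" using x2 G0 gt by (simp add: mult_pos_neg)
    thus "s * g + c * ln (1 - g) < 0" unfolding G_def by auto
  }
qed


lemma small_exp:
  fixes s lam b k :: real
  assumes b: "0 < b" and k: "k = 1 \<or> k = -1" and neg: "k * (s + lam * ln b) < 0"
  shows "\<exists>p. 0 < p \<and> p < 1 \<and> k * s * p + lam * (b powr (k * p) - 1) < 0"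
proof -
  define F where "F = (\<lambda>p. k * s * p + lam * (b powr (k * p) - 1))"
  have "(F has_real_derivative (k * s + lam * (k * ln b * b powr (k * 0)))) (at 0)"
    unfolding F_def using b
    by (auto intro!: derivative_eq_intros)
  hence D: "(F has_real_derivative k * (s + lam * ln b)) (at 0)" using b by (simp add: algebra_simps)
  obtain d where d: "d > 0" "\<forall>h>0. h < d \<longrightarrow> F (0 + h) < F 0"
    using DERIV_neg_dec_right[OF D neg] by blast
  define p where "p = min (d/2) (1/2)"
  have "F p < F 0" using d unfolding p_def by auto
  moreover have "F 0 = 0" unfolding F_def using b by simp
  ultimately show ?thesis unfolding F_def p_def by (intro exI[of _ "min (d/2) (1/2)"]) (auto simp: d)
qed


lemma cpt_sub:
  fixes z :: "'a::metric_space \<Rightarrow> real \<Rightarrow> real"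
  assumes K: "compact K" and c: "continuous_on K (\<lambda>(p,t). z p t)"
    and S: "S = {(p,t). (p,t)\<in>K \<and> z p t \<le> 0}"
  shows "compact S"
proof -
  define C where "C = K \<inter> (\<lambda>(p,t). z p t) -` {..0}"
  have "S = K \<inter> C" unfolding S C_def by auto
  moreover have "closed C"
    unfolding C_def using continuous_closed_preimage[OF c compact_imp_closed[OF K]] by auto
  ultimately show ?thesis using compact_Int_closed[OF K] by metis
qed

lemma key1D:
  fixes z :: "real \<Rightarrow> real \<Rightarrow> real"
  assumes p: "p \<in> {0..1}" and t: "t > 0" and mn: "\<forall>q\<in>{0..1}. z q t \<ge> 0" and z0: "z p t = 0"
    and bef: "\<forall>s\<in>{0..<t}. z p s > 0"
    and dt: "((\<lambda>s. z p s) has_real_derivative zt) (at t)"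
    and dx: "0 < p \<Longrightarrow> p < 1 \<Longrightarrow> ((\<lambda>y. z y t) has_real_derivative zx) (at p within {0..1})"
    and lam: "lam \<ge> 0" and J: "Jp \<in> {0..1}"
    and op: "zt + s * p * (1 - p) * zx - lam * (z Jp t - z p t) > 0"
  shows False
proof -
  have "zt \<le> 0" using tderiv_nonpos[OF dt] z0 bef t by auto
  moreover have "s * p * (1 - p) * zx = 0"
  proof (cases "0 < p \<and> p < 1")
    case True
    have "zx = 0" using True p mn z0
      by (intro fermat01[OF dx, of 0 1]) auto
    thus ?thesis by simp
  next
    case False
    hence "p = 0 \<or> p = 1" using p by auto
    thus ?thesis by auto
  qed
  moreover have "lam * (z Jp t - z p t) \<ge> 0" using mn J z0 lam by auto
  ultimately show False using op by linarith
qed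

lemma const_deriv0:
  fixes h :: "real \<Rightarrow> real"
  assumes c: "continuous_on {0..} h" and d: "\<And>t. t > 0 \<Longrightarrow> (h has_real_derivative 0) (at t)"
    and t: "t \<ge> 0"
  shows "h t = h 0"
proof (cases "t = 0")
  case False
  hence t0: "t > 0" using t by auto
  have c': "continuous_on {0..t} h" using continuous_on_subset[OF c] by auto
  have "h 0 \<le> h t" using DERIV_nonneg_imp_increasing_open[of 0 t h] t0 c' d by auto
  moreover have "h t \<le> h 0" using DERIV_nonpos_imp_decreasing_open[of 0 t h] t0 c' d by auto
  ultimately show ?thesis by auto
qed simp


lemma delta_limit:
  fixes A t :: real
  assumes "\<And>d. d > 0 \<Longrightarrow> 0 < A + d * exp t"
  shows "0 \<le> A"
proof (rule ccontr)
  assume "\<not> 0 \<le> A"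
  hence pos: "- A / (2 * exp t) > 0" by (intro divide_pos_pos) auto
  have "(- A / (2 * exp t)) * exp t = - A / 2" by simp
  hence "0 < A - A / 2" using assms[OF pos] by simp
  thus False using \<open>\<not> 0 \<le> A\<close> by simp
qed

locale sol =
  fixes \<sigma> lam \<gamma> :: real and u ux ut :: "real \<Rightarrow> real \<Rightarrow> real"
  assumes cont: "continuous_on ({0..1}\<times>{0..}) (\<lambda>(x,t). u x t)"
  and init: "\<And>x. x\<in>{0..1} \<Longrightarrow> u x 0 = x"
  and dx: "\<And>x t. x\<in>{0..1} \<Longrightarrow> t>0 \<Longrightarrow> ((\<lambda>y. u y t) has_real_derivative ux x t) (at x within {0..1})"
  and dt: "\<And>x t. x\<in>{0..1} \<Longrightarrow> t>0 \<Longrightarrow> ((\<lambda>s. u x s) has_real_derivative ut x t) (at t)"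
  and pde: "\<And>x t. x\<in>{0..1} \<Longrightarrow> t>0 \<Longrightarrow> ut x t + \<sigma>*x*(1-x)*ux x t = lam*(u (x+\<gamma>*(1-x)) t - u x t)"
  and lam: "lam \<ge> 0" and sig: "\<sigma> \<ge> 0" and gam: "0 < \<gamma>" "\<gamma> < 1"
begin

lemma J_in: "x \<in> {0..1} \<Longrightarrow> x + \<gamma>*(1-x) \<in> {0..1}"
proof -
  assume x: "x \<in> {0..1}"
  have "0 \<le> (1-\<gamma>)*(1-x)" using x gam by auto
  hence "x + \<gamma>*(1-x) \<le> 1" by (simp add: algebra_simps)
  moreover have "0 \<le> x + \<gamma>*(1-x)" using x gam by auto
  ultimately show ?thesis by auto
qed

lemma contx: "x \<in> {0..1} \<Longrightarrow> continuous_on {0..} (u x)"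
proof -
  assume x: "x \<in> {0..1}"
  have "continuous_on {0..} ((\<lambda>(x,t). u x t) \<circ> (\<lambda>t. (x,t)))"
    by (intro continuous_on_compose continuous_intros continuous_on_subset[OF cont]) (use x in auto)
  thus ?thesis by (simp add: o_def)
qed

lemma contK: "continuous_on ({0..1}\<times>{0..T}) (\<lambda>(x,t). u x t)"
  by (rule continuous_on_subset[OF cont]) auto

lemma u1: "t \<ge> 0 \<Longrightarrow> u 1 t = 1"
proof -
  assume t: "t \<ge> 0"
  have "u 1 t = u 1 0"
  proof (rule const_deriv0[OF contx[of 1] _ t])
    fix s :: real assume s: "s > 0"
    have "ut 1 s = 0" using pde[of 1 s] s by simp
    thus "(u 1 has_real_derivative 0) (at s)" using dt[of 1 s] s by simp
  qed simp
  thus ?thesis using init[of 1] by simp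
qed

end

context sol begin

lemma comp1D:
  fixes w :: "real \<Rightarrow> real \<Rightarrow> real" and e :: real
  assumes e: "e = 1 \<or> e = -1"
    and wc: "continuous_on ({0..1}\<times>{0..}) (\<lambda>(x,t). w x t)"
    and w0: "\<And>x. x \<in> {0..1} \<Longrightarrow> e * (x - w x 0) \<ge> 0"
    and wd: "\<And>x t. x \<in> {0..1} \<Longrightarrow> t > 0 \<Longrightarrow> \<exists>wx wt.
        (0 < x \<longrightarrow> x < 1 \<longrightarrow> ((\<lambda>y. w y t) has_real_derivative wx) (at x within {0..1})) \<and>
        ((\<lambda>s. w x s) has_real_derivative wt) (at t) \<and>
        e * (wt + \<sigma> * x * (1 - x) * wx - lam * (w (x + \<gamma>*(1-x)) t - w x t)) \<le> 0"
    and x: "x \<in> {0..1}" and t: "t \<ge> 0"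
  shows "e * (u x t - w x t) \<ge> 0"
proof (rule delta_limit[of _ t])
  fix d :: real assume d: "d > 0"
  define z where "z = (\<lambda>x t. e * (u x t - w x t) + d * exp t)"
  have "z x t > 0"
  proof (rule first_zero[of "{0..1}" z])
    fix p :: real assume p: "p \<in> {0..1}"
    show "z p 0 > 0" using w0[OF p] init[OF p] d unfolding z_def by auto
  next
    fix T :: real assume T: "T \<ge> 0"
    show "compact {(p, t). p \<in> {0..1} \<and> t \<in> {0..T} \<and> z p t \<le> 0}"
    proof (rule cpt_sub[of "{0..1}\<times>{0..T}"])
      show "compact ({0..1::real}\<times>{0..T})" by (intro compact_Times) auto
      have c1: "continuous_on ({0..1}\<times>{0..T}) (\<lambda>(x,t). u x t)" by (rule contK)
      have c2: "continuous_on ({0..1}\<times>{0..T}) (\<lambda>(x,t). w x t)"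
        by (rule continuous_on_subset[OF wc]) auto
      have A: "continuous_on ({0..1}\<times>{0..T})
          (\<lambda>pt. e * ((\<lambda>(x,t). u x t) pt - (\<lambda>(x,t). w x t) pt) + d * exp (snd pt))"
        by (intro continuous_intros c1 c2)
      have B: "(\<lambda>pt. e * ((\<lambda>(x,t). u x t) pt - (\<lambda>(x,t). w x t) pt) + d * exp (snd pt))
          = (\<lambda>(p, t). z p t)" unfolding z_def by auto
      show "continuous_on ({0..1}\<times>{0..T}) (\<lambda>(p, t). z p t)" using A unfolding B .
    qed auto
  next
    fix p s :: real assume p: "p \<in> {0..1}" and s: "s > 0"
    obtain wx wt where W: "((\<lambda>s. w p s) has_real_derivative wt) (at s)"
      using wd[OF p s] by blast
    have "((\<lambda>s. z p s) has_real_derivative e * (ut p s - wt) + d * exp s) (at s)"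
      unfolding z_def by (auto intro!: derivative_eq_intros dt[OF p s] W)
    hence "continuous (at s) (z p)" using DERIV_isCont by auto
    thus "continuous (at_left s) (z p)" using continuous_at_imp_continuous_at_within by blast
  next
    fix p s :: real assume p: "p \<in> {0..1}" and s: "s > 0"
      and mn: "\<forall>q\<in>{0..1}. 0 \<le> z q s" and z0: "z p s = 0" and bef: "\<forall>r\<in>{0..<s}. 0 < z p r"
    obtain wx wt where W: "0 < p \<longrightarrow> p < 1 \<longrightarrow> ((\<lambda>y. w y s) has_real_derivative wx) (at p within {0..1})"
      "((\<lambda>s. w p s) has_real_derivative wt) (at s)"
      "e * (wt + \<sigma> * p * (1 - p) * wx - lam * (w (p + \<gamma>*(1-p)) s - w p s)) \<le> 0"
      using wd[OF p s] by blast
    show False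
    proof (rule key1D[OF p s mn z0 bef _ _ lam J_in[OF p]])
      show "((\<lambda>r. z p r) has_real_derivative e * (ut p s - wt) + d * exp s) (at s)"
        unfolding z_def by (auto intro!: derivative_eq_intros dt[OF p s] W(2))
      assume "0 < p" "p < 1"
      thus "((\<lambda>y. z y s) has_real_derivative e * (ux p s - wx)) (at p within {0..1})"
        unfolding z_def using W(1) dx[OF p s] by (auto intro!: derivative_eq_intros)
    next
      have P: "ut p s + \<sigma>*p*(1-p)*ux p s - lam*(u (p+\<gamma>*(1-p)) s - u p s) = 0" using pde[OF p s] by simp
      have "e * (ut p s - wt) + d * exp s + \<sigma> * p * (1 - p) * (e * (ux p s - wx))
          - lam * (z (p + \<gamma> * (1 - p)) s - z p s)
        = e * (ut p s + \<sigma>*p*(1-p)*ux p s - lam*(u (p+\<gamma>*(1-p)) s - u p s))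
          - e * (wt + \<sigma> * p * (1 - p) * wx - lam * (w (p + \<gamma>*(1-p)) s - w p s)) + d * exp s"
        unfolding z_def by (simp add: algebra_simps)
      also have "\<dots> \<ge> d * exp s" using P W(3) by simp
      finally show "0 < e * (ut p s - wt) + d * exp s + \<sigma> * p * (1 - p) * (e * (ux p s - wx))
          - lam * (z (p + \<gamma> * (1 - p)) s - z p s)" using d by (smt (verit) exp_gt_zero mult_pos_pos)
    qed
  qed (use x t in auto)
  thus "0 < e * (u x t - w x t) + d * exp t" unfolding z_def by simp
qed

lemma upper: "x \<in> {0..1} \<Longrightarrow> t \<ge> 0 \<Longrightarrow> u x t \<le> 1"
proof -
  assume x: "x \<in> {0..1}" and t: "t \<ge> 0"
  have "-1 * (u x t - 1) \<ge> 0"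
  proof (rule comp1D[of "-1" "\<lambda>x t. 1" x t, OF _ _ _ _ x t])
    fix y s :: real assume "y \<in> {0..1}" "s > 0"
    show "\<exists>wx wt. (0 < y \<longrightarrow> y < 1 \<longrightarrow> ((\<lambda>y. 1) has_real_derivative wx) (at y within {0..1})) \<and>
        ((\<lambda>s. 1) has_real_derivative wt) (at s) \<and>
        -1 * (wt + \<sigma> * y * (1 - y) * wx - lam * (1 - 1)) \<le> 0"
      by (intro exI[of _ 0]) auto
  qed (auto intro: continuous_intros)
  thus ?thesis by simp
qed

end

context sol begin

lemma transient_lower:
  assumes p: "0 < p" "p \<le> 1" and a: "a = \<sigma> * p + lam * ((1-\<gamma>) powr p - 1)"
    and x: "x \<in> {0..1}" and t: "t \<ge> 0"
  shows "u x t \<ge> 1 - exp (a * t) * (1 - x) powr p"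
proof -
  define w where "w = (\<lambda>x t. 1 - exp (a * t) * (1 - x) powr p)"
  have "1 * (u x t - w x t) \<ge> 0"
  proof (rule comp1D[of 1 w x t, OF _ _ _ _ x t])
    have "continuous_on ({0..1}\<times>{0..}) (\<lambda>pt. 1 - exp (a * snd pt) * (1 - fst pt) powr p)"
      using p by (intro continuous_intros continuous_on_powr') auto
    moreover have "(\<lambda>pt. 1 - exp (a * snd pt) * (1 - fst pt) powr p) = (\<lambda>(x,t). w x t)"
      unfolding w_def by auto
    ultimately show "continuous_on ({0..1}\<times>{0..}) (\<lambda>(x,t). w x t)" by metis
  next
    fix y :: real assume y: "y \<in> {0..1}"
    have "(1 - y) powr 1 \<le> (1 - y) powr p" using y p by (intro powr_mono') auto
    thus "1 * (y - w y 0) \<ge> 0" unfolding w_def using y by auto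
  next
    fix y s :: real assume y: "y \<in> {0..1}" and s: "s > 0"
    define wx where "wx = exp (a * s) * p * (1 - y) powr (p - 1)"
    define wt where "wt = - a * exp (a * s) * (1 - y) powr p"
    have D1: "0 < y \<longrightarrow> y < 1 \<longrightarrow> ((\<lambda>y. w y s) has_real_derivative wx) (at y within {0..1})"
      unfolding w_def wx_def by (auto intro!: derivative_eq_intros)
    have "\<And>C. ((\<lambda>s. 1 - exp (a * s) * C) has_real_derivative - a * exp (a * s) * C) (at s)"
      by (auto intro!: derivative_eq_intros)
    hence D2: "((\<lambda>s. w y s) has_real_derivative wt) (at s)"
      unfolding w_def wt_def by blast
    have "1 * (wt + \<sigma> * y * (1 - y) * wx - lam * (w (y + \<gamma>*(1-y)) s - w y s)) \<le> 0"
    proof -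
      define B where "B = (1 - y) powr p"
      have B0: "B \<ge> 0" unfolding B_def by simp
      have e1: "(1 - y) * wx = exp (a * s) * p * B"
      proof (cases "y = 1")
        case True thus ?thesis unfolding wx_def B_def using p by simp
      next
        case False
        have h: "(1 - y) * (1 - y) powr (p - 1) = (1 - y) powr (1 + (p - 1))"
          using y by (intro powr_mult_base) auto
        have "(1 - y) * wx = exp (a * s) * p * ((1 - y) * (1 - y) powr (p - 1))"
          unfolding wx_def by (simp only: ac_simps)
        also have "\<dots> = exp (a * s) * p * B" unfolding h B_def by simp
        finally show ?thesis .
      qed
      have e2: "(1 - (y + \<gamma>*(1-y))) powr p = (1-\<gamma>) powr p * B"
      proof -
        have "1 - (y + \<gamma>*(1-y)) = (1-\<gamma>) * (1-y)" by (simp add: algebra_simps)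
        thus ?thesis unfolding B_def by (simp add: powr_mult)
      qed
      have "wt + \<sigma> * y * (1 - y) * wx - lam * (w (y + \<gamma>*(1-y)) s - w y s)
          = exp (a * s) * B * (- a + \<sigma> * p * y + lam * ((1-\<gamma>) powr p - 1))"
      proof -
        have s1: "\<sigma> * y * (1 - y) * wx = \<sigma> * y * ((1 - y) * wx)" by (simp only: mult.assoc)
        have s2: "w (y + \<gamma>*(1-y)) s - w y s = - exp (a * s) * ((1-\<gamma>) powr p * B) + exp (a * s) * B"
          unfolding w_def e2 B_def by simp
        have s3: "wt = - a * exp (a * s) * B" unfolding wt_def B_def by simp
        show ?thesis unfolding s1 s2 s3 e1 by (simp add: algebra_simps)
      qed
      also have "\<dots> = - exp (a * s) * B * (\<sigma> * p * (1 - y))" unfolding a by (simp add: algebra_simps)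
      also have "\<dots> \<le> 0" using B0 p y gam lam by (auto intro!: mult_nonneg_nonneg simp: sig)
      finally show ?thesis by simp
    qed
    thus "\<exists>wx wt. (0 < y \<longrightarrow> y < 1 \<longrightarrow> ((\<lambda>y. w y s) has_real_derivative wx) (at y within {0..1})) \<and>
        ((\<lambda>s. w y s) has_real_derivative wt) (at s) \<and>
        1 * (wt + \<sigma> * y * (1 - y) * wx - lam * (w (y + \<gamma>*(1-y)) s - w y s)) \<le> 0"
      using D1 D2 by blast
  qed auto
  thus ?thesis unfolding w_def by simp
qed

end

lemma Phi_ge:
  fixes x y q :: real
  assumes "0 \<le> x" "x \<le> y" "y < 1" "0 < q"
  shows "((1-y) powr (-q) - (1-x) powr (-q)) / q \<ge> y - x"
proof (cases "x = y")
  case False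
  hence xy: "x < y" using assms by auto
  define h where "h = (\<lambda>s::real. (1-s) powr (-q) / q - s)"
  define h' where "h' = (\<lambda>s::real. (1-s) powr (-q-1) - 1)"
  have D: "(h has_real_derivative h' s) (at s)" if "s < 1" for s
  proof -
    have "(h has_real_derivative ((-q) * (1-s) powr (-q-1) * (-1)) / q - 1) (at s)"
      unfolding h_def using that by (auto intro!: derivative_eq_intros)
    thus ?thesis unfolding h'_def using assms(4) by simp
  qed
  obtain z where z: "x < z" "z < y" "h y - h x = (y - x) * h' z"
    using MVT2[of x y h h'] D xy assms by force
  have "(1-z) powr 0 \<le> (1-z) powr (-q-1)" using z assms by (intro powr_mono') auto
  hence "h' z \<ge> 0" using z assms unfolding h'_def by auto
  hence "h y - h x \<ge> 0" using z xy by simp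
  thus ?thesis unfolding h_def by (simp add: diff_divide_distrib)
qed simp

lemma key2D:
  fixes z :: "real \<times> real \<Rightarrow> real \<Rightarrow> real"
  assumes D: "D = {(x,y). 0 \<le> x \<and> x \<le> y \<and> y < 1}"
    and p: "(x,y) \<in> D" and t: "t > 0" and mn: "\<forall>q\<in>D. z q t \<ge> 0" and z0: "z (x,y) t = 0"
    and bef: "\<forall>r\<in>{0..<t}. z (x,y) r > 0" and xy: "x < y"
    and dt: "((\<lambda>s. z (x,y) s) has_real_derivative zt) (at t)"
    and dx: "0 < x \<Longrightarrow> ((\<lambda>x'. z (x',y) t) has_real_derivative zx) (at x within {0..1})"
    and dy: "((\<lambda>y'. z (x,y') t) has_real_derivative zy) (at y within {0..1})"
    and lam: "lam \<ge> 0" and J: "(Jx,Jy) \<in> D"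
    and op: "zt + s*x*(1-x)*zx + s*y*(1-y)*zy - lam*(z (Jx,Jy) t - z (x,y) t) > 0"
  shows False
proof -
  have "zt \<le> 0" using tderiv_nonpos[OF dt] z0 bef t by auto
  moreover have "s * x * (1 - x) * zx = 0"
  proof (cases "0 < x")
    case True
    have "zx = 0"
    proof (rule fermat01[OF dx[OF True], of 0 y])
      fix x' :: real assume "0 < x'" "x' < y"
      hence "(x', y) \<in> D" using p D by auto
      thus "z (x, y) t \<le> z (x', y) t" using mn z0 by auto
    qed (use True xy p D in auto)
    thus ?thesis by simp
  next
    case False
    hence "x = 0" using p D by auto
    thus ?thesis by simp
  qed
  moreover have "zy = 0"
  proof (rule fermat01[OF dy, of x 1])
    fix y' :: real assume "x < y'" "y' < 1"
    hence "(x, y') \<in> D" using p D by auto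
    thus "z (x, y) t \<le> z (x, y') t" using mn z0 by auto
  qed (use xy p D in auto)
  hence "s * y * (1 - y) * zy = 0" by simp
  moreover have "lam * (z (Jx,Jy) t - z (x,y) t) \<ge> 0" using mn J z0 lam by auto
  ultimately show False using op by linarith
qed


definition Phi :: "real \<Rightarrow> real \<Rightarrow> real \<Rightarrow> real" where
  "Phi q x y = ((1-y) powr (-q) - (1-x) powr (-q)) / q"

context sol begin

lemma cpt2D:
  assumes q: "q > 0" and e: "e = 1 \<or> e = -1" and d: "\<delta> > 0" and T: "T \<ge> 0" and kap: "\<kappa> \<ge> 0"
    and Ddef: "D = {(x,y). 0 \<le> x \<and> x \<le> y \<and> y < (1::real)}"
    and zdef: "z = (\<lambda>(x,y) t. exp(-\<kappa>*t) * Phi q x y - e*(u y t - u x t) + \<delta>*exp t)"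
  shows "compact {(p,t). p\<in>D \<and> t\<in>{0..T} \<and> z p t \<le> 0}"
proof -
  define S where "S = {0..1::real}\<times>{0..T}"
  have cS: "compact S" unfolding S_def by (intro compact_Times) auto
  have "compact ((\<lambda>(x,t). u x t) ` S)" unfolding S_def by (intro compact_continuous_image contK cS[unfolded S_def])
  then obtain M where M: "\<forall>v\<in>(\<lambda>(x,t). u x t) ` S. norm v \<le> M"
    using compact_imp_bounded bounded_iff by metis
  have Mb: "\<bar>u x t\<bar> \<le> M" if "x \<in> {0..1}" "t \<in> {0..T}" for x t
    using M that unfolding S_def by force
  have "uniformly_continuous_on S (\<lambda>(x,t). u x t)" unfolding S_def
    by (intro compact_uniformly_continuous contK cS[unfolded S_def])
  then obtain \<eta> where eta: "\<eta> > 0" "\<forall>a\<in>S. \<forall>a'\<in>S. dist a' a < \<eta> \<longrightarrow> dist ((\<lambda>(x,t). u x t) a') ((\<lambda>(x,t). u x t) a) < \<delta>"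
    using d unfolding uniformly_continuous_on_def by metis
  have M0: "M \<ge> 0" using Mb[of 0 0] T by auto
  define Kc where "Kc = q * (2 * M * exp (\<kappa> * T)) + \<eta> powr (-q)"
  have Kc: "Kc > 0" unfolding Kc_def using q M0 eta by (intro add_nonneg_pos) auto
  define \<beta> where "\<beta> = Kc powr (-1/q)"
  have beta: "\<beta> > 0" unfolding \<beta>_def using Kc by simp
  define b where "b = 1 - \<beta>"
  have bad: "y \<le> b" if xy: "(x,y) \<in> D" and t: "t \<in> {0..T}" and zz: "z (x,y) t \<le> 0" for x y t
  proof -
    have xy': "0 \<le> x" "x \<le> y" "y < 1" using xy Ddef by auto
    have Phi0: "Phi q x y \<ge> y - x" unfolding Phi_def using Phi_ge[OF xy' q] .
    have Ub: "\<bar>u y t - u x t\<bar> \<le> 2 * M" using Mb[of x t] Mb[of y t] xy' t by auto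
    have zz': "exp(-\<kappa>*t) * Phi q x y + \<delta>*exp t \<le> e*(u y t - u x t)" using zz unfolding zdef by simp
    have eU: "e*(u y t - u x t) \<le> \<bar>u y t - u x t\<bar>" using e by auto
    have P0: "exp(-\<kappa>*t) * Phi q x y \<ge> 0" using Phi0 xy' by simp
    have "\<delta> * 1 \<le> \<delta> * exp t" using d t by (intro mult_left_mono) auto
    hence Ud: "\<bar>u y t - u x t\<bar> \<ge> \<delta>" using zz' eU P0 by linarith
    have yx: "y - x \<ge> \<eta>"
    proof (rule ccontr)
      assume "\<not> y - x \<ge> \<eta>"
      hence "dist (y,t) (x,t) < \<eta>" using xy' by (simp add: dist_Pair_Pair dist_real_def)
      moreover have "(x,t) \<in> S" "(y,t) \<in> S" using xy' t unfolding S_def by auto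
      ultimately have "dist (u y t) (u x t) < \<delta>" using eta(2) by fastforce
      thus False using Ud by (simp add: dist_real_def)
    qed
    have "exp(-\<kappa>*t) * Phi q x y \<le> 2 * M" using zz' eU Ub d by (smt (verit) exp_gt_zero mult_pos_pos)
    hence "Phi q x y \<le> 2 * M * exp (\<kappa> * t)"
      by (simp add: exp_minus field_simps)
    also have "\<dots> \<le> 2 * M * exp (\<kappa> * T)" using M0 kap t by (intro mult_left_mono) (auto intro: mult_left_mono)
    finally have PhiT: "Phi q x y \<le> 2 * M * exp (\<kappa> * T)" .
    have Ax: "(1-x) powr (-q) \<le> \<eta> powr (-q)" using yx xy' q eta by (intro powr_mono2') auto
    have "(1-y) powr (-q) = q * Phi q x y + (1-x) powr (-q)" unfolding Phi_def using q by simp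
    also have "\<dots> \<le> Kc" unfolding Kc_def using PhiT Ax q by (intro add_mono mult_left_mono) auto
    finally have Ay: "(1-y) powr (-q) \<le> Kc" .
    show "y \<le> b"
    proof (rule ccontr)
      assume "\<not> y \<le> b"
      hence "1 - y < \<beta>" unfolding b_def by simp
      hence "\<beta> powr (-q) < (1-y) powr (-q)" using xy' q by (intro powr_less_mono2_neg) auto
      moreover have "\<beta> powr (-q) = Kc" unfolding \<beta>_def using q Kc by (simp add: powr_powr)
      ultimately show False using Ay by simp
    qed
  qed
  define K1 where "K1 = ({0..b}\<times>{0..b}) \<inter> {p::real\<times>real. fst p \<le> snd p}"
  have cK1: "compact K1" unfolding K1_def
    by (intro compact_Int_closed compact_Times closed_Collect_le continuous_intros) auto
  define K where "K = K1 \<times> {0..T}"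
  have cK: "compact K" unfolding K_def using cK1 by (intro compact_Times) auto
  have b1: "b < 1" unfolding b_def using beta by simp
  have KD: "(x,y) \<in> D" "t \<in> {0..T}" if "((x,y),t) \<in> K" for x y t
    using that b1 unfolding K_def K1_def Ddef by auto
  show ?thesis
  proof (rule cpt_sub[OF cK])
    show "{(p,t). p\<in>D \<and> t\<in>{0..T} \<and> z p t \<le> 0} = {(p,t). (p,t)\<in>K \<and> z p t \<le> 0}"
    proof safe
      fix x y t assume "(x,y) \<in> D" "t \<in> {0..T}" "z (x,y) t \<le> 0"
      thus "((x,y),t) \<in> K" using bad[of x y t] unfolding K_def K1_def Ddef by auto
    qed (use KD in auto)
  next
    define Z where "Z = (\<lambda>pt::(real\<times>real)\<times>real. exp(-\<kappa> * snd pt) * (((1 - snd (fst pt)) powr (-q) - (1 - fst (fst pt)) powr (-q))/q)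
        - e*((\<lambda>(x,t). u x t) (snd (fst pt), snd pt) - (\<lambda>(x,t). u x t) (fst (fst pt), snd pt)) + \<delta> * exp (snd pt))"
    have sub1: "(\<lambda>pt. (snd (fst pt), snd pt)) ` K \<subseteq> {0..1}\<times>{0..T}" using b1 unfolding K_def K1_def by auto
    have sub2: "(\<lambda>pt. (fst (fst pt), snd pt)) ` K \<subseteq> {0..1}\<times>{0..T}" using b1 unfolding K_def K1_def by auto
    have cu1: "continuous_on K (\<lambda>pt. (\<lambda>(x,t). u x t) (snd (fst pt), snd pt))"
      by (rule continuous_on_compose2[OF contK _ sub1]) (intro continuous_intros)
    have cu2: "continuous_on K (\<lambda>pt. (\<lambda>(x,t). u x t) (fst (fst pt), snd pt))"
      by (rule continuous_on_compose2[OF contK _ sub2]) (intro continuous_intros)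
    have "continuous_on K Z" unfolding Z_def using b1 q
      by (intro continuous_intros cu1 cu2 continuous_on_powr) (auto simp: K_def K1_def)
    moreover have "Z = (\<lambda>(p,t). z p t)" unfolding Z_def zdef Phi_def by (auto simp: fun_eq_iff)
    ultimately show "continuous_on K (\<lambda>(p,t). z p t)" by simp
  qed
qed

end

context sol begin

lemma recurrent_bound:
  assumes q: "0 < q" "q < 1" and kap: "\<kappa> = \<sigma>*q - lam*((1-\<gamma>) powr (-q) - 1)" "\<kappa> > 0"
    and e: "e = 1 \<or> e = -1"
    and xy: "0 \<le> x" "x \<le> y" "y < 1" and t: "t \<ge> 0"
  shows "e*(u y t - u x t) \<le> exp(-\<kappa>*t) * Phi q x y"
proof -
  define D where "D = {(x,y). 0 \<le> x \<and> x \<le> y \<and> y < (1::real)}"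
  have "0 \<le> exp(-\<kappa>*t) * Phi q x y - e*(u y t - u x t)"
  proof (rule delta_limit[of _ t])
    fix \<delta> :: real assume d: "\<delta> > 0"
    define z where "z = (\<lambda>(x,y) t. exp(-\<kappa>*t) * Phi q x y - e*(u y t - u x t) + \<delta>*exp t)"
    have zxy: "z (x,y) t = exp(-\<kappa>*t) * Phi q x y - e*(u y t - u x t) + \<delta>*exp t" for x y t
      unfolding z_def by simp
    have "z (x,y) t > 0"
    proof (rule first_zero[of D z])
      fix p assume "p \<in> D"
      then obtain x y where p: "p = (x,y)" "0 \<le> x" "x \<le> y" "y < 1" unfolding D_def by auto
      have "Phi q x y \<ge> y - x" unfolding Phi_def using Phi_ge[OF p(2-4) q(1)] .
      moreover have "e * (y - x) \<le> y - x" using e p by auto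
      ultimately show "z p 0 > 0" unfolding p zxy using init[of x] init[of y] p d by auto
    next
      fix T :: real assume "T \<ge> 0"
      thus "compact {(p,t). p\<in>D \<and> t\<in>{0..T} \<and> z p t \<le> 0}"
        using cpt2D[OF q(1) e d _ _ D_def z_def] kap by auto
    next
      fix p s assume pD: "p \<in> D" and s: "(s::real) > 0"
      then obtain x y where p: "p = (x,y)" "0 \<le> x" "x \<le> y" "y < 1" unfolding D_def by auto
      have "((\<lambda>s. z (x,y) s) has_real_derivative
          -\<kappa> * exp(-\<kappa> * s) * Phi q x y - e*(ut y s - ut x s) + \<delta>*exp s) (at s)"
        unfolding zxy using p s by (auto intro!: derivative_eq_intros dt)
      hence "continuous (at s) (z p)" using DERIV_isCont p by auto
      thus "continuous (at_left s) (z p)" using continuous_at_imp_continuous_at_within by blast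
    next
      fix p s assume pD: "p \<in> D" and s: "(s::real) > 0" and mn: "\<forall>q\<in>D. 0 \<le> z q s"
        and z0: "z p s = 0" and bef: "\<forall>r\<in>{0..<s}. 0 < z p r"
      obtain x y where p: "p = (x,y)" "0 \<le> x" "x \<le> y" "y < 1" using pD unfolding D_def by auto
      have xy: "x < y"
      proof (rule ccontr)
        assume "\<not> x < y"
        hence "x = y" using p by auto
        thus False using z0 d unfolding p zxy Phi_def by simp
      qed
      have x1: "x \<in> {0..1}" and y1: "y \<in> {0..1}" using p by auto
      define Jx where "Jx = x + \<gamma>*(1-x)"
      define Jy where "Jy = y + \<gamma>*(1-y)"
      have J: "(Jx, Jy) \<in> D"
      proof -
        have "Jy - Jx = (1-\<gamma>)*(y-x)" unfolding Jx_def Jy_def by (simp add: algebra_simps)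
        moreover have "(1-\<gamma>)*(y-x) \<ge> 0" using p gam by auto
        ultimately have "Jx \<le> Jy" by linarith
        moreover have "1 - Jy = (1-\<gamma>)*(1-y)" unfolding Jy_def by (simp add: algebra_simps)
        moreover have "(1-\<gamma>)*(1-y) > 0" using gam p by auto
        moreover have "0 \<le> Jx" unfolding Jx_def using p gam by auto
        ultimately show ?thesis unfolding D_def by auto
      qed
      define Ax where "Ax = (1-x) powr (-q)"
      define Ay where "Ay = (1-y) powr (-q)"
      define E where "E = exp(-\<kappa> * s)"
      define c where "c = (1-\<gamma>) powr (-q) - 1"
      define zt where "zt = -\<kappa> * E * Phi q x y - e*(ut y s - ut x s) + \<delta>*exp s"
      define zx where "zx = E * (-((1-x) powr (-q-1))) + e * ux x s"
      define zy where "zy = E * (1-y) powr (-q-1) - e * ux y s"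
      show False
      proof (rule key2D[OF D_def pD[unfolded p] s mn z0[unfolded p] bef[unfolded p] xy _ _ _ lam J])
        show "((\<lambda>s. z (x,y) s) has_real_derivative zt) (at s)"
          unfolding zxy zt_def E_def using p s by (auto intro!: derivative_eq_intros dt)
      next
        assume "0 < x"
        have "((\<lambda>x'. z (x',y) s) has_real_derivative
            E * ((0 - (-q * (1-x) powr (-q-1) * (0 - 1))) / q) - e * (0 - ux x s) + 0) (at x within {0..1})"
          unfolding zxy Phi_def E_def using p s q
          by (intro derivative_eq_intros) (insert q p, auto intro: dx[OF x1 s])
        moreover have "E * ((0 - (-q * (1-x) powr (-q-1) * (0 - 1))) / q) - e * (0 - ux x s) + 0 = zx"
          unfolding zx_def using q by simp
        ultimately show "((\<lambda>x'. z (x',y) s) has_real_derivative zx) (at x within {0..1})" by simp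
      next
        have "((\<lambda>y'. z (x,y') s) has_real_derivative
            E * (((-q * (1-y) powr (-q-1) * (0 - 1)) - 0) / q) - e * (ux y s - 0) + 0) (at y within {0..1})"
          unfolding zxy Phi_def E_def using p s q
          by (intro derivative_eq_intros) (insert q p, auto intro: dx[OF y1 s])
        moreover have "E * (((-q * (1-y) powr (-q-1) * (0 - 1)) - 0) / q) - e * (ux y s - 0) + 0 = zy"
          unfolding zy_def using q by simp
        ultimately show "((\<lambda>y'. z (x,y') s) has_real_derivative zy) (at y within {0..1})" by simp
      next
        have Px: "ut x s + \<sigma>*x*(1-x)*ux x s = lam*(u Jx s - u x s)" using pde[OF x1 s] unfolding Jx_def .
        have Py: "ut y s + \<sigma>*y*(1-y)*ux y s = lam*(u Jy s - u y s)" using pde[OF y1 s] unfolding Jy_def .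
        have hx: "(1-x) * (1-x) powr (-q-1) = Ax" unfolding Ax_def using p powr_mult_base[of "1-x" "-q-1"] by simp
        have hy: "(1-y) * (1-y) powr (-q-1) = Ay" unfolding Ay_def using p powr_mult_base[of "1-y" "-q-1"] by simp
        have hx2: "(1-x) * Ax = (1-x) powr (1-q)" unfolding Ax_def using p powr_mult_base[of "1-x" "-q"] by simp
        have hy2: "(1-y) * Ay = (1-y) powr (1-q)" unfolding Ay_def using p powr_mult_base[of "1-y" "-q"] by simp
        have JAx: "(1-Jx) powr (-q) = (c+1) * Ax"
        proof -
          have "1 - Jx = (1-\<gamma>)*(1-x)" unfolding Jx_def by (simp add: algebra_simps)
          thus ?thesis unfolding Ax_def c_def by (simp add: powr_mult)
        qed
        have JAy: "(1-Jy) powr (-q) = (c+1) * Ay"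
        proof -
          have "1 - Jy = (1-\<gamma>)*(1-y)" unfolding Jy_def by (simp add: algebra_simps)
          thus ?thesis unfolding Ay_def c_def by (simp add: powr_mult)
        qed
        have PhiJ: "Phi q Jx Jy = (c+1) * Phi q x y" unfolding Phi_def JAx JAy Ax_def Ay_def
          by (simp add: right_diff_distrib[symmetric])
        have Phixy: "q * Phi q x y = Ay - Ax" unfolding Phi_def Ax_def Ay_def using q by simp
        have kk: "\<kappa> = \<sigma>*q - lam*c" unfolding c_def kap(1) ..
        have zJ: "z (Jx,Jy) s - z (x,y) s = E * (c * Phi q x y) - e*((u Jy s - u Jx s) - (u y s - u x s))"
        proof -
          have a1: "z (Jx,Jy) s = E * Phi q Jx Jy - e*(u Jy s - u Jx s) + \<delta>*exp s" unfolding E_def by (rule zxy)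
          have a2: "z (x,y) s = E * Phi q x y - e*(u y s - u x s) + \<delta>*exp s" unfolding E_def by (rule zxy)
          have "z (Jx,Jy) s - z (x,y) s = E * Phi q Jx Jy - E * Phi q x y - e*((u Jy s - u Jx s) - (u y s - u x s))"
            unfolding a1 a2 by (simp add: algebra_simps)
          also have "E * Phi q Jx Jy - E * Phi q x y = E * (c * Phi q x y)" unfolding PhiJ
            by (simp add: algebra_simps)
          finally show ?thesis .
        qed
        have tx: "\<sigma> * x * (1 - x) * zx = - \<sigma> * x * E * Ax + e * (\<sigma> * x * (1-x) * ux x s)"
        proof -
          have "\<sigma> * x * (1 - x) * zx = - \<sigma> * x * E * ((1-x) * (1-x) powr (-q-1)) + e * (\<sigma> * x * (1-x) * ux x s)"
            unfolding zx_def by (simp add: algebra_simps)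
          thus ?thesis unfolding hx .
        qed
        have ty: "\<sigma> * y * (1 - y) * zy = \<sigma> * y * E * Ay - e * (\<sigma> * y * (1-y) * ux y s)"
        proof -
          have "\<sigma> * y * (1 - y) * zy = \<sigma> * y * E * ((1-y) * (1-y) powr (-q-1)) - e * (\<sigma> * y * (1-y) * ux y s)"
            unfolding zy_def by (simp add: algebra_simps)
          thus ?thesis unfolding hy .
        qed
        have "zt + \<sigma>*x*(1-x)*zx + \<sigma>*y*(1-y)*zy - lam*(z (Jx,Jy) s - z (x,y) s)
            = E * (- \<kappa> * Phi q x y - \<sigma> * x * Ax + \<sigma> * y * Ay - lam * c * Phi q x y)
              - e * ((ut y s + \<sigma>*y*(1-y)*ux y s) - lam*(u Jy s - u y s))
              + e * ((ut x s + \<sigma>*x*(1-x)*ux x s) - lam*(u Jx s - u x s)) + \<delta> * exp s"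
          unfolding tx ty zJ zt_def by (simp add: algebra_simps)
        also have "\<dots> = E * (- \<kappa> * Phi q x y - \<sigma> * x * Ax + \<sigma> * y * Ay - lam * c * Phi q x y) + \<delta> * exp s"
          using Px Py by simp
        also have "- \<kappa> * Phi q x y - \<sigma> * x * Ax + \<sigma> * y * Ay - lam * c * Phi q x y
            = \<sigma> * ((1-x) * Ax - (1-y) * Ay)"
        proof -
          have "- \<kappa> * Phi q x y - \<sigma> * x * Ax + \<sigma> * y * Ay - lam * c * Phi q x y
              = - \<sigma> * (q * Phi q x y) - \<sigma> * x * Ax + \<sigma> * y * Ay" unfolding kk by (simp add: algebra_simps)
          also have "\<dots> = \<sigma> * ((1-x) * Ax - (1-y) * Ay)" unfolding Phixy by (simp add: algebra_simps)
          finally show ?thesis .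
        qed
        also have "\<dots> = \<sigma> * ((1-x) powr (1-q) - (1-y) powr (1-q))" unfolding hx2 hy2 ..
        finally have eq: "zt + \<sigma>*x*(1-x)*zx + \<sigma>*y*(1-y)*zy - lam*(z (Jx,Jy) s - z (x,y) s)
            = E * (\<sigma> * ((1-x) powr (1-q) - (1-y) powr (1-q))) + \<delta> * exp s" .
        have "(1-y) powr (1-q) \<le> (1-x) powr (1-q)" using p q by (intro powr_mono2) auto
        hence "E * (\<sigma> * ((1-x) powr (1-q) - (1-y) powr (1-q))) \<ge> 0" unfolding E_def using sig by simp
        moreover have "\<delta> * exp s > 0" using d by simp
        ultimately show "zt + \<sigma>*x*(1-x)*zx + \<sigma>*y*(1-y)*zy - lam*(z (Jx,Jy) s - z (x,y) s) > 0"
          unfolding eq by linarith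
      qed
    qed (use xy t D_def in auto)
    thus "0 < exp(-\<kappa>*t) * Phi q x y - e*(u y t - u x t) + \<delta> * exp t" unfolding zxy .
  qed
  thus ?thesis by simp
qed

end

context sol begin

lemma recurrent_limit:
  assumes q: "0 < q" "q < 1" and kap: "\<kappa> = \<sigma>*q - lam*((1-\<gamma>) powr (-q) - 1)" "\<kappa> > 0"
  shows "\<exists>L. \<forall>x\<in>{0..<1}. ((\<lambda>t. u x t) \<longlongrightarrow> L) at_top"
proof -
  have bnd: "\<bar>u y t - u x t\<bar> \<le> exp(-\<kappa>*t) * Phi q x y" if "0 \<le> x" "x \<le> y" "y < 1" "t \<ge> 0" for x y t
    using recurrent_bound[OF q kap, of 1 x y t] recurrent_bound[OF q kap, of "-1" x y t] that by auto
  define C where "C = lam * Phi q 0 \<gamma>"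
  have utb: "\<bar>ut 0 t\<bar> \<le> C * exp(-\<kappa>*t)" if t: "t > 0" for t
  proof -
    have "ut 0 t = lam * (u \<gamma> t - u 0 t)" using pde[of 0 t] t by simp
    hence "\<bar>ut 0 t\<bar> = lam * \<bar>u \<gamma> t - u 0 t\<bar>" using lam by (simp add: abs_mult)
    also have "\<dots> \<le> lam * (exp(-\<kappa>*t) * Phi q 0 \<gamma>)" using bnd[of 0 \<gamma> t] gam t lam
      by (intro mult_left_mono) auto
    finally show ?thesis unfolding C_def by (simp add: algebra_simps)
  qed
  define Vp where "Vp = (\<lambda>t. u 0 t + (C/\<kappa>) * exp(-\<kappa>*t))"
  define Vm where "Vm = (\<lambda>t. u 0 t - (C/\<kappa>) * exp(-\<kappa>*t))"
  have c0: "continuous_on {0..} (u 0)" using contx[of 0] by simp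
  have cVp: "continuous_on {0..} Vp" unfolding Vp_def by (intro continuous_intros c0)
  have cVm: "continuous_on {0..} Vm" unfolding Vm_def by (intro continuous_intros c0)
  have dVp: "(Vp has_real_derivative ut 0 t - C * exp(-\<kappa>*t)) (at t)" if "t > 0" for t
  proof -
    have "(Vp has_real_derivative ut 0 t + (C/\<kappa>) * (exp(-\<kappa>*t) * (- \<kappa>))) (at t)"
      unfolding Vp_def using that by (auto intro!: derivative_eq_intros dt)
    thus ?thesis using kap(2) by (simp add: field_simps)
  qed
  have dVm: "(Vm has_real_derivative ut 0 t + C * exp(-\<kappa>*t)) (at t)" if "t > 0" for t
  proof -
    have "(Vm has_real_derivative ut 0 t - (C/\<kappa>) * (exp(-\<kappa>*t) * (- \<kappa>))) (at t)"
      unfolding Vm_def using that by (auto intro!: derivative_eq_intros dt)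
    thus ?thesis using kap(2) by (simp add: field_simps)
  qed
  have decVp: "Vp b \<le> Vp a" if "0 \<le> a" "a \<le> b" for a b
  proof (rule DERIV_nonpos_imp_decreasing_open[OF that(2)])
    fix x assume "a < x" "x < b"
    hence "x > 0" using that by auto
    thus "\<exists>y. (Vp has_real_derivative y) (at x) \<and> y \<le> 0" using dVp utb by force
  qed (rule continuous_on_subset[OF cVp], use that in auto)
  have incVm: "Vm a \<le> Vm b" if "0 \<le> a" "a \<le> b" for a b
  proof (rule DERIV_nonneg_imp_increasing_open[OF that(2)])
    fix x assume "a < x" "x < b"
    hence "x > 0" using that by auto
    thus "\<exists>y. (Vm has_real_derivative y) (at x) \<and> 0 \<le> y" using dVm utb by force
  qed (rule continuous_on_subset[OF cVm], use that in auto)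
  have VpVm: "Vm t \<le> Vp t" if "t \<ge> 0" for t
  proof -
    have "C \<ge> 0" unfolding C_def Phi_def using lam Phi_ge[of 0 \<gamma> q] gam q
      by (intro mult_nonneg_nonneg) (auto simp: Phi_def)
    thus ?thesis unfolding Vm_def Vp_def using kap by simp
  qed
  define L where "L = Inf (Vp ` {0..})"
  have bdd: "bdd_below (Vp ` {0..})"
    by (rule bdd_belowI[of _ "Vm 0"]) (use incVm VpVm in \<open>fastforce\<close>)
  have VpL: "(Vp \<longlongrightarrow> L) at_top"
  proof (rule order_tendstoI)
    fix a assume "a < L"
    have Lle: "L \<le> Vp t" if "t \<ge> 0" for t unfolding L_def using bdd that by (intro cInf_lower) auto
    show "\<forall>\<^sub>F t in at_top. a < Vp t" using eventually_ge_at_top[of "0::real"]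
    proof (rule eventually_mono)
      fix t :: real assume "t \<ge> 0"
      thus "a < Vp t" using Lle[of t] \<open>a < L\<close> by linarith
    qed
  next
    fix a assume "L < a"
    then obtain t1 where t1: "t1 \<ge> 0" "Vp t1 < a" unfolding L_def
      using cInf_less_iff[of "Vp ` {0..}" a] bdd by auto
    show "\<forall>\<^sub>F t in at_top. Vp t < a" using eventually_ge_at_top[of t1]
      by (rule eventually_mono) (use decVp t1 in fastforce)
  qed
  have ex: "((\<lambda>t. (C/\<kappa>) * exp(-\<kappa>*t)) \<longlongrightarrow> 0) at_top" using kap by real_asymp
  have u0L: "((\<lambda>t. u 0 t) \<longlongrightarrow> L - 0) at_top"
  proof -
    have "((\<lambda>t. Vp t - (C/\<kappa>) * exp(-\<kappa>*t)) \<longlongrightarrow> L - 0) at_top" by (intro tendsto_diff VpL ex)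
    thus ?thesis unfolding Vp_def by simp
  qed
  show ?thesis
  proof (intro exI[of _ L] ballI)
    fix x :: real assume x: "x \<in> {0..<1}"
    have "((\<lambda>t. u x t - u 0 t) \<longlongrightarrow> 0) at_top"
    proof (rule Lim_null_comparison)
      show "\<forall>\<^sub>F t in at_top. norm (u x t - u 0 t) \<le> exp(-\<kappa>*t) * Phi q 0 x"
        using eventually_ge_at_top[of 0] by (rule eventually_mono) (use bnd x in auto)
      show "((\<lambda>t. exp(-\<kappa>*t) * Phi q 0 x) \<longlongrightarrow> 0) at_top" using kap by real_asymp
    qed
    hence "((\<lambda>t. (u x t - u 0 t) + u 0 t) \<longlongrightarrow> 0 + (L - 0)) at_top" by (intro tendsto_add u0L)
    thus "((\<lambda>t. u x t) \<longlongrightarrow> L) at_top" by simp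
  qed
qed

lemma transient_limit:
  assumes p: "0 < p" "p \<le> 1" and a: "a = \<sigma> * p + lam * ((1-\<gamma>) powr p - 1)" "a < 0"
    and x: "x \<in> {0..<1}"
  shows "((\<lambda>t. u x t) \<longlongrightarrow> 1) at_top"
proof -
  have "((\<lambda>t. 1 - exp (a * t) * (1 - x) powr p) \<longlongrightarrow> 1 - 0) at_top"
    using a(2) by (intro tendsto_diff tendsto_const) real_asymp
  hence lo: "((\<lambda>t. 1 - exp (a * t) * (1 - x) powr p) \<longlongrightarrow> 1) at_top" by simp
  show ?thesis
  proof (rule tendsto_sandwich[OF _ _ lo tendsto_const])
    show "\<forall>\<^sub>F t in at_top. 1 - exp (a * t) * (1 - x) powr p \<le> u x t"
      using eventually_ge_at_top[of 0] by (rule eventually_mono) (use transient_lower[OF p a(1)] x in auto)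
    show "\<forall>\<^sub>F t in at_top. u x t \<le> 1"
      using eventually_ge_at_top[of 0] by (rule eventually_mono) (use upper x in auto)
  qed
qed

end

theorem proposition4p11:
  fixes \<sigma> f m \<gamma> \<gamma>s :: real and u :: "real \<Rightarrow> real \<Rightarrow> real"
  assumes "\<sigma> > 0" "f > 0" "m > 0" "\<sigma> > m * f"
    and "\<gamma>s \<in> {0<..<1}" "\<sigma> * \<gamma>s + m * f * ln (1 - \<gamma>s) = 0"
    and "\<gamma> \<in> {0<..<1}" "\<gamma> \<noteq> \<gamma>s"
    and "classical_solution \<sigma> m f \<gamma> u"
  shows "\<exists>ubar. \<forall>x\<in>{0..<1}. ((\<lambda>t. u x t) \<longlongrightarrow> ubar) at_top"
proof -
  obtain ux ut :: "real \<Rightarrow> real \<Rightarrow> real" where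
    cont: "continuous_on ({0..1} \<times> {0..}) (\<lambda>(x, t). u x t)" and
    init: "\<forall>x\<in>{0..1}. u x 0 = x" and
    H: "\<forall>x\<in>{0..1}. \<forall>t>0.
           ((\<lambda>y. u y t) has_real_derivative ux x t) (at x within {0..1}) \<and>
           ((\<lambda>s. u x s) has_real_derivative ut x t) (at t) \<and>
           ut x t + \<sigma> * x * (1 - x) * ux x t
             = (m * f / \<gamma>) * (u (x + \<gamma> * (1 - x)) t - u x t)"
    using assms(9) unfolding classical_solution_def by blast
  define lam where "lam = m * f / \<gamma>"
  have g: "0 < \<gamma>" "\<gamma> < 1" using assms(7) by auto
  have mf: "m * f > 0" using assms(2,3) by simp
  interpret sol \<sigma> lam \<gamma> u ux ut
  proof
    show "lam \<ge> 0" unfolding lam_def using mf g by simp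
  qed (use cont init H g assms(1) in \<open>auto simp: lam_def\<close>)
  have L: "\<sigma> + lam * ln (1 - \<gamma>) = (\<sigma> * \<gamma> + m * f * ln (1 - \<gamma>)) / \<gamma>"
    unfolding lam_def using g by (simp add: field_simps)
  have gs: "0 < \<gamma>s" "\<gamma>s < 1" using assms(5) by auto
  show ?thesis
  proof (cases "\<gamma> < \<gamma>s")
    case True
    have "\<sigma> * \<gamma> + m * f * ln (1 - \<gamma>) > 0" using g_sign(1)[OF mf gs assms(6) g True] .
    hence "(\<sigma> * \<gamma> + m * f * ln (1 - \<gamma>)) / \<gamma> > 0" using g by (intro divide_pos_pos) auto
    hence "-1 * (\<sigma> + lam * ln (1 - \<gamma>)) < 0" unfolding L by linarith
    then obtain q where q: "0 < q" "q < 1" "-1 * \<sigma> * q + lam * ((1-\<gamma>) powr (-1 * q) - 1) < 0"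
      using small_exp[of "1-\<gamma>" "-1" \<sigma> lam] g by auto
    show ?thesis
      by (rule recurrent_limit[OF q(1,2) refl]) (use q(3) in auto)
  next
    case False
    hence gt: "\<gamma> > \<gamma>s" using assms(8) by auto
    have "\<sigma> * \<gamma> + m * f * ln (1 - \<gamma>) < 0" using g_sign(2)[OF mf gs assms(6) g gt] .
    hence "1 * (\<sigma> + lam * ln (1 - \<gamma>)) < 0" unfolding L using g by (simp add: divide_neg_pos)
    then obtain p where p: "0 < p" "p < 1" "1 * \<sigma> * p + lam * ((1-\<gamma>) powr (1 * p) - 1) < 0"
      using small_exp[of "1-\<gamma>" 1 \<sigma> lam] g by auto
    show ?thesis
      by (intro exI[of _ 1] ballI transient_limit[OF p(1) _ refl]) (use p in auto)
  qed
qed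

end
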